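(* Let $f:\mathbb{R}^n\to\mathbb{R}$ be convex, let $\nu\in\mathbb{N}$ and $k\in\{1,\ldots,\nu\}$. Write states as $x=(x^1,\ldots,x^\nu)$ with $x^j\in\mathbb{R}^n$. (i) Consider the system with state set $X=(\mathbb{R}^n)^\nu$ and input $u_t\in\mathbb{R}^n$, $$x_{t+1}=(x_t^2,\ldots,x_t^\nu,u_t),\qquad y_t=u_t-x_t^k ,$$ (equivalently $x_{t+1}=A_\psi x_t+B_\psi u_t$, $y_t=C_\psi x_t+u_t$ with $A_\psi=A_\nu\otimes I_n$, $B_\psi=e_\nu\otimes I_n$, $C_\psi=(-e_k^\top)\otimes I_n$, where $A_\nu\in\mathbb{R}^{\nu\times\nu}$ is the upper Jordan block with eigenvalue zero). This system is dissipative with respect to the multi-valued supply rate $S(u,y)=\partial f(u)^\top y$ with storage function $V_k(x)=\sum_{j=k}^\nu f(x^j)$; that is, for every trajectory, all $t_1\le t_2$ in $\mathbb{N}_0$ and all $g_t\in\partial f(u_t)$, $V_k(x_{t_2})\le V_k(x_{t_1})+\sum_{t=t_1}^{t_2-1}g_t^\top y_t$. (ii) Let $X_{\partial f}:=\{z\in\mathbb{R}^n: z\in\partial f(u)\text{ for some }u\in\mathbb{R}^n\}$ and $X^*:=(X_{\partial f})^\nu$. Consider the system with state set $X^*$ and input $u_t\in\mathbb{R}^n$, $$x_{t+1}=(x_t^2,\ldots,x_t^\nu,v_t),\qquad y_t=v_t-x_t^k,\qquad v_t\in\partial f(u_t).$$ This system is passive (dissipative with respect to $S(u,y)=u^\top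 y$) on $X^*$ with storage function $V_k^*(x)=\sum_{j=k}^\nu f^*(x^j)$; that is, for all such trajectories with $x_t\in X^*$ and all $t_1\le t_2$ in $\mathbb{N}_0$, $V_k^*(x_{t_2})\le V_k^*(x_{t_1})+\sum_{t=t_1}^{t_2-1}u_t^\top y_t$.
   Context: $\partial f$ is the subdifferential of $f$; $f^*(x)=\sup_{w\in\mathbb{R}^n}[x^\top w-f(w)]$ is the Fenchel conjugate, finite on $X_{\partial f}$. $e_j$ denotes the $j$-th standard unit vector of $\mathbb{R}^\nu$, $\otimes$ the Kronecker product, $I_n$ the $n\times n$ identity matrix. *)

theory Defs
  imports "HOL-Analysis.Analysis"
begin

definition subdiff :: "('a::real_inner \<Rightarrow> real) \<Rightarrow> 'a \<Rightarrow> 'a set" where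
  "subdiff f u = {g. \<forall>w. f w \<ge> f u + inner g (w - u)}"

definition subdiff_range :: "('a::real_inner \<Rightarrow> real) \<Rightarrow> 'a set" where
  "subdiff_range f = {z. \<exists>u. z \<in> subdiff f u}"

text \<open>Fenchel conjugate (meaningful/finite on subdiff_range f).\<close>
definition fconj :: "('a::real_inner \<Rightarrow> real) \<Rightarrow> 'a \<Rightarrow> real" where
  "fconj f x = (SUP w. inner x w - f w)"

end

theory Submission
  imports Defs
begin

lemma shift_sum:
  fixes h :: "'a \<Rightarrow> real"
  assumes "1 \<le> k" "k \<le> \<nu>" "\<forall>j. 1 \<le> j \<and> j < \<nu> \<longrightarrow> y j = z (Suc j)"
  shows "(\<Sum>j=k..\<nu>. h (y j)) + h (z k) = (\<Sum>j=k..\<nu>. h (z j)) + h (y \<nu>)"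
proof -
  have a: "(\<Sum>j=k..\<nu>. h (y j)) = (\<Sum>j=k..<\<nu>. h (y j)) + h (y \<nu>)"
    using assms(2) by (simp add: sum.last_plus)
  have b: "(\<Sum>j=k..<\<nu>. h (y j)) = (\<Sum>j=k..<\<nu>. h (z (Suc j)))"
    using assms by (intro sum.cong) auto
  have c: "(\<Sum>j=k..<\<nu>. h (z (Suc j))) = (\<Sum>j=Suc k..<Suc \<nu>. h (z j))"
    by (rule sum.shift_bounds_Suc_ivl[symmetric])
  have d: "(\<Sum>j=k..\<nu>. h (z j)) = h (z k) + (\<Sum>j=Suc k..\<nu>. h (z j))"
    using assms(2) by (simp add: sum.atLeast_Suc_atMost)
  have e: "{Suc k..<Suc \<nu>} = {Suc k..\<nu>}" by auto
  show ?thesis using a b c d e by simp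
qed

lemma telescope:
  fixes V s :: "nat \<Rightarrow> real"
  assumes "\<And>t. t1 \<le> t \<Longrightarrow> t < t2 \<Longrightarrow> V (Suc t) \<le> V t + s t" "t1 \<le> t2"
  shows "V t2 \<le> V t1 + (\<Sum>t=t1..<t2. s t)"
  using assms(2,1)
proof (induction t2 rule: dec_induct)
  case base then show ?case by simp
next
  case (step m)
  have "V (Suc m) \<le> V m + s m" using step by auto
  moreover have "V m \<le> V t1 + (\<Sum>t=t1..<m. s t)" using step by auto
  ultimately show ?case using step(1) by simp
qed

lemma fconj_le:
  assumes "z \<in> subdiff_range f"
  shows "inner z w - f w \<le> fconj f z"
proof -
  obtain u where u: "z \<in> subdiff f u" using assms unfolding subdiff_range_def by auto
  have "bdd_above (range (\<lambda>w. inner z w - f w))"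
  proof (rule bdd_aboveI2)
    fix w show "inner z w - f w \<le> inner z u - f u"
    proof -
      have "f u + inner z (w - u) \<le> f w" using u unfolding subdiff_def by blast
      then show ?thesis by (simp add: inner_diff_right)
    qed
  qed
  then show ?thesis unfolding fconj_def by (rule cSUP_upper[OF UNIV_I])
qed

lemma fconj_eq_le:
  assumes "v \<in> subdiff f u"
  shows "fconj f v \<le> inner v u - f u"
  unfolding fconj_def
proof (rule cSUP_least)
  fix w show "inner v w - f w \<le> inner v u - f u"
  proof -
    have "f u + inner v (w - u) \<le> f w" using assms unfolding subdiff_def by blast
    then show ?thesis by (simp add: inner_diff_right)
  qed
qed simp

theorem corollary6:
  fixes f :: "real^'n \<Rightarrow> real" and \<nu> k :: nat
  assumes cvx: "convex_on UNIV f"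
    and k: "1 \<le> k" "k \<le> \<nu>"
  shows
   "(\<forall>(x :: nat \<Rightarrow> nat \<Rightarrow> real^'n) (u :: nat \<Rightarrow> real^'n).
       (\<forall>t. (\<forall>j. 1 \<le> j \<and> j < \<nu> \<longrightarrow> x (Suc t) j = x t (Suc j)) \<and> x (Suc t) \<nu> = u t) \<longrightarrow>
       (\<forall>t1 t2 (g :: nat \<Rightarrow> real^'n). t1 \<le> t2 \<and> (\<forall>t\<in>{t1..<t2}. g t \<in> subdiff f (u t)) \<longrightarrow>
          (\<Sum>j=k..\<nu>. f (x t2 j)) \<le> (\<Sum>j=k..\<nu>. f (x t1 j)) + (\<Sum>t=t1..<t2. inner (g t) (u t - x t k))))
    \<and>
    (\<forall>(x :: nat \<Rightarrow> nat \<Rightarrow> real^'n) (u :: nat \<Rightarrow> real^'n) (v :: nat \<Rightarrow> real^'n).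
       (\<forall>t. (\<forall>j. 1 \<le> j \<and> j < \<nu> \<longrightarrow> x (Suc t) j = x t (Suc j)) \<and> x (Suc t) \<nu> = v t
            \<and> v t \<in> subdiff f (u t)
            \<and> (\<forall>j\<in>{1..\<nu>}. x t j \<in> subdiff_range f)) \<longrightarrow>
       (\<forall>t1 t2. t1 \<le> t2 \<longrightarrow>
          (\<Sum>j=k..\<nu>. fconj f (x t2 j)) \<le> (\<Sum>j=k..\<nu>. fconj f (x t1 j)) + (\<Sum>t=t1..<t2. inner (u t) (v t - x t k))))"
proof (intro conjI allI impI)
  fix x :: "nat \<Rightarrow> nat \<Rightarrow> real^'n" and u :: "nat \<Rightarrow> real^'n" and t1 t2 and g :: "nat \<Rightarrow> real^'n"
  assume dyn: "\<forall>t. (\<forall>j. 1 \<le> j \<and> j < \<nu> \<longrightarrow> x (Suc t) j = x t (Suc j)) \<and> x (Suc t) \<nu> = u t"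
    and h: "t1 \<le> t2 \<and> (\<forall>t\<in>{t1..<t2}. g t \<in> subdiff f (u t))"
  show "(\<Sum>j=k..\<nu>. f (x t2 j)) \<le> (\<Sum>j=k..\<nu>. f (x t1 j)) + (\<Sum>t=t1..<t2. inner (g t) (u t - x t k))"
  proof (rule telescope[where V="\<lambda>t. \<Sum>j=k..\<nu>. f (x t j)"])
    fix t assume t: "t1 \<le> t" "t < t2"
    have eq: "(\<Sum>j=k..\<nu>. f (x (Suc t) j)) + f (x t k) = (\<Sum>j=k..\<nu>. f (x t j)) + f (u t)"
      using shift_sum[OF k, of "x (Suc t)" "x t" f] dyn by auto
    have "g t \<in> subdiff f (u t)" using h t by auto
    then have "f (x t k) \<ge> f (u t) + inner (g t) (x t k - u t)" unfolding subdiff_def by auto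
    moreover have "inner (g t) (x t k - u t) = - inner (g t) (u t - x t k)"
      by (simp add: inner_diff_right)
    ultimately show "(\<Sum>j=k..\<nu>. f (x (Suc t) j)) \<le> (\<Sum>j=k..\<nu>. f (x t j)) + inner (g t) (u t - x t k)"
      using eq by linarith
  qed (use h in auto)
next
  fix x :: "nat \<Rightarrow> nat \<Rightarrow> real^'n" and u v :: "nat \<Rightarrow> real^'n" and t1 t2 :: nat
  assume dyn: "\<forall>t. (\<forall>j. 1 \<le> j \<and> j < \<nu> \<longrightarrow> x (Suc t) j = x t (Suc j)) \<and> x (Suc t) \<nu> = v t
            \<and> v t \<in> subdiff f (u t)
            \<and> (\<forall>j\<in>{1..\<nu>}. x t j \<in> subdiff_range f)"
    and h: "t1 \<le> t2"
  show "(\<Sum>j=k..\<nu>. fconj f (x t2 j)) \<le> (\<Sum>j=k..\<nu>. fconj f (x t1 j)) + (\<Sum>t=t1..<t2. inner (u t) (v t - x t k))"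
  proof (rule telescope[where V="\<lambda>t. \<Sum>j=k..\<nu>. fconj f (x t j)"])
    fix t
    have eq: "(\<Sum>j=k..\<nu>. fconj f (x (Suc t) j)) + fconj f (x t k) = (\<Sum>j=k..\<nu>. fconj f (x t j)) + fconj f (v t)"
      using shift_sum[OF k, of "x (Suc t)" "x t" "fconj f"] dyn by auto
    have r: "x t k \<in> subdiff_range f" using dyn k by auto
    have 1: "inner (x t k) (u t) - f (u t) \<le> fconj f (x t k)" by (rule fconj_le[OF r])
    have 2: "fconj f (v t) \<le> inner (v t) (u t) - f (u t)" using fconj_eq_le dyn by blast
    have 3: "inner (u t) (v t - x t k) = inner (v t) (u t) - inner (x t k) (u t)"
      by (simp add: inner_diff_right inner_commute)
    show "(\<Sum>j=k..\<nu>. fconj f (x (Suc t) j)) \<le> (\<Sum>j=k..\<nu>. fconj f (x t j)) + inner (u t) (v t - x t k)"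
      using eq 1 2 3 by linarith
  qed (use h in auto)
qed

end
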